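(* Let $k\ge 2$ and let $G$ be a $\Gamma_{\times k,t}$-external graph with $\delta(G)\ge k$. Then for every graph $H$ with $\delta(H)\ge k$, \[ \Gamma_{\times k,t}(G\,\Box\,H)\ge\Gamma_{\times k,t}(G)\cdot\Gamma_{\times k,t}(H). \]
   Context: A set $S\subseteq V(G)$ is a $k$-tuple total dominating set ($k$TDS) of a graph $G$ with $\delta(G)\ge k$ if $|N_G(x)\cap S|\ge k$ for every $x\in V(G)$. The upper $k$-tuple total domination number $\Gamma_{\times k,t}(G)$ is the maximum cardinality of a minimal (with respect to inclusion) $k$TDS of $G$; a minimal $k$TDS of this cardinality is a $\Gamma_{\times k,t}$-set. For $v\in S$, a vertex $v'$ is a $k$-open private neighbor of $v$ with respect to $S$ if $v\in N_G(v')$ and $|N_G(v')\cap S|=k$; it is external if $v'\notin S$. A graph $G$ is $\Gamma_{\times k,t}$-external if it has a $\Gamma_{\times k,t}$-set $S$ such that every vertex of $S$ has an external $k$-open private neighbor with respect to $S$. The Cartesian product $G\,\Box\,H$ has vertex set $V(G)\times V(H)$, with $(g_1,h_1)\sim(g_2,h_2)$ iff either $g_1=g_2$ and $h_1h_2\in E(H)$, or $h_1=h_2$ and $g_1g_2\in E(G)$. *)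

theory Defs
  imports Main
begin

definition simple_graph :: "'a set \<Rightarrow> ('a \<Rightarrow> 'a \<Rightarrow> bool) \<Rightarrow> bool" where
  "simple_graph V E \<longleftrightarrow> finite V \<and> (\<forall>x y. E x y \<longrightarrow> x \<in> V \<and> y \<in> V)
     \<and> (\<forall>x y. E x y \<longrightarrow> E y x) \<and> (\<forall>x. \<not> E x x)"

definition nbhd :: "'a set \<Rightarrow> ('a \<Rightarrow> 'a \<Rightarrow> bool) \<Rightarrow> 'a \<Rightarrow> 'a set" where
  "nbhd V E x = {y \<in> V. E x y}"

definition min_degree_ge :: "'a set \<Rightarrow> ('a \<Rightarrow> 'a \<Rightarrow> bool) \<Rightarrow> nat \<Rightarrow> bool" where
  "min_degree_ge V E k \<longleftrightarrow> (\<forall>x\<in>V. k \<le> card (nbhd V E x))"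

definition is_kTDS :: "'a set \<Rightarrow> ('a \<Rightarrow> 'a \<Rightarrow> bool) \<Rightarrow> nat \<Rightarrow> 'a set \<Rightarrow> bool" where
  "is_kTDS V E k S \<longleftrightarrow> S \<subseteq> V \<and> (\<forall>x\<in>V. k \<le> card (nbhd V E x \<inter> S))"

definition minimal_kTDS :: "'a set \<Rightarrow> ('a \<Rightarrow> 'a \<Rightarrow> bool) \<Rightarrow> nat \<Rightarrow> 'a set \<Rightarrow> bool" where
  "minimal_kTDS V E k S \<longleftrightarrow> is_kTDS V E k S \<and> (\<forall>T. T \<subset> S \<longrightarrow> \<not> is_kTDS V E k T)"

definition upper_ktdn :: "'a set \<Rightarrow> ('a \<Rightarrow> 'a \<Rightarrow> bool) \<Rightarrow> nat \<Rightarrow> nat" where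
  "upper_ktdn V E k = Max {card S | S. minimal_kTDS V E k S}"

definition Gamma_kt_set :: "'a set \<Rightarrow> ('a \<Rightarrow> 'a \<Rightarrow> bool) \<Rightarrow> nat \<Rightarrow> 'a set \<Rightarrow> bool" where
  "Gamma_kt_set V E k S \<longleftrightarrow> minimal_kTDS V E k S \<and> card S = upper_ktdn V E k"

definition k_open_private_nbr ::
  "'a set \<Rightarrow> ('a \<Rightarrow> 'a \<Rightarrow> bool) \<Rightarrow> nat \<Rightarrow> 'a set \<Rightarrow> 'a \<Rightarrow> 'a \<Rightarrow> bool" where
  "k_open_private_nbr V E k S v v' \<longleftrightarrow>
     v' \<in> V \<and> v \<in> nbhd V E v' \<and> card (nbhd V E v' \<inter> S) = k"

definition Gamma_kt_external :: "'a set \<Rightarrow> ('a \<Rightarrow> 'a \<Rightarrow> bool) \<Rightarrow> nat \<Rightarrow> bool" where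
  "Gamma_kt_external V E k \<longleftrightarrow> (\<exists>S. Gamma_kt_set V E k S \<and>
     (\<forall>v\<in>S. \<exists>v'. v' \<notin> S \<and> k_open_private_nbr V E k S v v'))"

definition cart_edges :: "('a \<Rightarrow> 'a \<Rightarrow> bool) \<Rightarrow> ('b \<Rightarrow> 'b \<Rightarrow> bool) \<Rightarrow> ('a \<times> 'b) \<Rightarrow> ('a \<times> 'b) \<Rightarrow> bool" where
  "cart_edges EG EH p q \<longleftrightarrow>
     (fst p = fst q \<and> EH (snd p) (snd q)) \<or> (snd p = snd q \<and> EG (fst p) (fst q))"

end

theory Submission
  imports Defs
begin

lemma min_card_le:
  assumes "finite V" "minimal_kTDS V E k S"
  shows "card S \<le> card V"
  using assms unfolding minimal_kTDS_def is_kTDS_def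
  by (meson card_mono)

lemma fin_cards:
  assumes "finite V"
  shows "finite {card S | S. minimal_kTDS V E k S}"
proof -
  have "{card S | S. minimal_kTDS V E k S} \<subseteq> {..card V}"
    using min_card_le[OF assms] by auto
  thus ?thesis using finite_subset by blast
qed

lemma exists_minimal:
  assumes "simple_graph V E" "min_degree_ge V E k"
  shows "\<exists>S. minimal_kTDS V E k S"
proof -
  have fin: "finite V" using assms unfolding simple_graph_def by auto
  have VV: "is_kTDS V E k V"
    using assms unfolding min_degree_ge_def is_kTDS_def nbhd_def by (auto simp: Int_absorb2)
  define P where "P = (\<lambda>T. is_kTDS V E k T)"
  have "P V" using VV P_def by simp
  obtain S where S: "P S" "\<And>T. P T \<Longrightarrow> card S \<le> card T"
    using ex_has_least_nat[of P V card] \<open>P V\<close> by blast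
  have SV: "S \<subseteq> V" using S(1) unfolding P_def is_kTDS_def by auto
  have "minimal_kTDS V E k S"
    unfolding minimal_kTDS_def
  proof (intro conjI allI impI)
    show "is_kTDS V E k S" using S P_def by simp
    fix T assume "T \<subset> S"
    then have "card T < card S" using fin SV by (meson finite_subset psubset_card_mono)
    then show "\<not> is_kTDS V E k T" using S(2) P_def by force
  qed
  thus ?thesis by blast
qed

lemma upper_le_card:
  assumes "simple_graph V E" "min_degree_ge V E k"
  shows "upper_ktdn V E k \<le> card V"
proof -
  have fin: "finite V" using assms unfolding simple_graph_def by auto
  obtain S where "minimal_kTDS V E k S" using exists_minimal[OF assms] by blast
  then have ne: "{card S | S. minimal_kTDS V E k S} \<noteq> {}" by blast
  show ?thesis unfolding upper_ktdn_def
    using fin_cards[OF fin] ne min_card_le[OF fin]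
    by (subst Max_le_iff) auto
qed

theorem mainTheorem11:
  fixes VG :: "'a set" and EG :: "'a \<Rightarrow> 'a \<Rightarrow> bool"
    and VH :: "'b set" and EH :: "'b \<Rightarrow> 'b \<Rightarrow> bool" and k :: nat
  assumes "2 \<le> k"
    and "simple_graph VG EG" and "min_degree_ge VG EG k" and "Gamma_kt_external VG EG k"
    and "simple_graph VH EH" and "min_degree_ge VH EH k"
  shows "upper_ktdn (VG \<times> VH) (cart_edges EG EH) k \<ge> upper_ktdn VG EG k * upper_ktdn VH EH k"
proof -
  obtain S where SG: "Gamma_kt_set VG EG k S"
    and ext: "\<forall>v\<in>S. \<exists>v'. v' \<notin> S \<and> k_open_private_nbr VG EG k S v v'"
    using assms(4) unfolding Gamma_kt_external_def by blast
  have Smin: "minimal_kTDS VG EG k S" and Scard: "card S = upper_ktdn VG EG k"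
    using SG Gamma_kt_set_def by auto
  have SV: "S \<subseteq> VG" and Sdom: "\<forall>x\<in>VG. k \<le> card (nbhd VG EG x \<inter> S)"
    using Smin unfolding minimal_kTDS_def is_kTDS_def by auto
  have finG: "finite VG" and finH: "finite VH"
    using assms(2,5) unfolding simple_graph_def by auto
  have finP: "finite (VG \<times> VH)" using finG finH by simp
  have EGV: "\<And>x y. EG x y \<Longrightarrow> x \<in> VG \<and> y \<in> VG" using assms(2) unfolding simple_graph_def by auto
  let ?V = "VG \<times> VH" and ?E = "cart_edges EG EH" and ?D = "S \<times> VH"
  have kt: "is_kTDS ?V ?E k ?D"
    unfolding is_kTDS_def
  proof (intro conjI ballI)
    show "?D \<subseteq> ?V" using SV by auto
    fix p assume p: "p \<in> ?V"
    obtain g h where gh: "p = (g,h)" by force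
    have "(\<lambda>x. (x,h)) ` (nbhd VG EG g \<inter> S) \<subseteq> nbhd ?V ?E p \<inter> ?D"
      using p gh unfolding nbhd_def cart_edges_def by auto
    moreover have "finite (nbhd ?V ?E p \<inter> ?D)"
      using finP unfolding nbhd_def by auto
    ultimately have "card ((\<lambda>x. (x,h)) ` (nbhd VG EG g \<inter> S)) \<le> card (nbhd ?V ?E p \<inter> ?D)"
      by (rule card_mono[rotated])
    moreover have "card ((\<lambda>x. (x,h)) ` (nbhd VG EG g \<inter> S)) = card (nbhd VG EG g \<inter> S)"
      by (rule card_image) (auto simp: inj_on_def)
    moreover have "k \<le> card (nbhd VG EG g \<inter> S)" using Sdom p gh by auto
    ultimately show "k \<le> card (nbhd ?V ?E p \<inter> ?D)" by simp
  qed
  have minD: "minimal_kTDS ?V ?E k ?D"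
    unfolding minimal_kTDS_def
  proof (intro conjI allI impI)
    show "is_kTDS ?V ?E k ?D" by (rule kt)
    fix T assume T: "T \<subset> ?D"
    then obtain v h where vh: "(v,h) \<in> ?D" "(v,h) \<notin> T" by auto
    then obtain v' where v': "v' \<notin> S" "k_open_private_nbr VG EG k S v v'"
      using ext by auto
    have v'V: "v' \<in> VG" and vn: "v \<in> nbhd VG EG v'" and cv: "card (nbhd VG EG v' \<inter> S) = k"
      using v'(2) unfolding k_open_private_nbr_def by auto
    have sub: "nbhd ?V ?E (v',h) \<inter> T \<subseteq> (\<lambda>x. (x,h)) ` (nbhd VG EG v' \<inter> S - {v})"
    proof
      fix q assume q: "q \<in> nbhd ?V ?E (v',h) \<inter> T"
      obtain x y where xy: "q = (x,y)" by force
      have qD: "q \<in> ?D" using q T by auto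
      have "?E (v',h) (x,y)" using q xy unfolding nbhd_def by auto
      then have "(v' = x \<and> EH h y) \<or> (h = y \<and> EG v' x)" unfolding cart_edges_def by simp
      moreover have "x \<in> S" using qD xy by auto
      ultimately have "h = y \<and> EG v' x" using v'(1) by auto
      moreover have "x \<noteq> v" using q xy vh(2) \<open>h = y \<and> EG v' x\<close> by auto
      ultimately show "q \<in> (\<lambda>x. (x,h)) ` (nbhd VG EG v' \<inter> S - {v})"
        using xy \<open>x \<in> S\<close> EGV unfolding nbhd_def by auto
    qed
    have finA: "finite (nbhd VG EG v' \<inter> S - {v})" using finG unfolding nbhd_def by auto
    have "card (nbhd ?V ?E (v',h) \<inter> T) \<le> card ((\<lambda>x. (x,h)) ` (nbhd VG EG v' \<inter> S - {v}))"
      using sub finA by (simp add: card_mono)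
    also have "\<dots> \<le> card (nbhd VG EG v' \<inter> S - {v})" using finA card_image_le by blast
    also have "\<dots> = k - 1" using cv vn vh(1) finA by (simp add: card_Diff_singleton_if)
    finally have "card (nbhd ?V ?E (v',h) \<inter> T) < k" using assms(1) by linarith
    moreover have "(v',h) \<in> ?V" using v'V vh(1) by auto
    ultimately show "\<not> is_kTDS ?V ?E k T" unfolding is_kTDS_def by force
  qed
  have "card ?D \<le> upper_ktdn ?V ?E k"
    unfolding upper_ktdn_def using fin_cards[OF finP] minD by (intro Max_ge) auto
  moreover have "card ?D = card S * card VH" by (simp add: card_cartesian_product)
  moreover have "upper_ktdn VH EH k \<le> card VH" using upper_le_card assms(5,6) by blast
  ultimately show ?thesis using Scard
    by (metis le_trans mult_le_mono2)
qed

end
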